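(* Let $\mathcal{R}=(G_0,e\to R)$ be an expanding replacement system with finite branching whose replacement graph $R$ is connected. Then there exists $i\in\mathbb{N}$ such that for every graph $G\in\Gamma(\mathcal{R})$, each collapsible subgraph of $G$ has an edge in common with at most $i$ other collapsible subgraphs of $G$.
   Context: A graph is a finite directed multigraph (loops, multiple edges allowed); isomorphisms preserve directions. A replacement system $\mathcal{R}=(G_0,e\to R)$: $G_0$ a graph, $e$ a non-loop edge from $v$ to $w$, $R$ a graph containing $v,w$ (initial and terminal vertices; others interior). Replacing an edge $\varepsilon$ of a graph means deleting it and gluing in a copy of $R$ identifying initial/terminal vertices with those of $\varepsilon$. An expansion of a graph is obtained by finitely many replacements; the full expansion sequence $G_n$ replaces all edges of $G_{n-1}$. $\mathcal{R}$ is expanding if $G_0,R$ have no isolated vertices, the initial and terminal vertices of $R$ are not adjacent, and $R$ has $\ge3$ vertices and $\ge2$ edges. $\mathcal{R}$ has finite branching if there is a uniform bound on the degrees of vertices of all $G_n$. The graph family $\Gamma(\mathcal{R})$ is the set of finite directed graphs $G$ having some expansion isomorphic to some expansion of $G_0$. Let $R_{\mathrm{loop}}$ be $R$ with initial and terminal vertices identified. A characteristic map for $R$ in $G$ is an isomorphism $\chi\colon R\to S$ or $\chi\colon R_{\mathrm{loop}}\to S$ onto a subgraph $S$ of $G$ such that for every interior vertex $u$ of $R$, every edge of $G$ incident on $\chi(u)$ lies in $S$; a collapsible subgraph of $G$ is the image of a characteristic map. *)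

theory Defs
  imports Main
begin

text \<open>Vertices and edges are natural numbers
  (every finite graph is isomorphic to such a graph, and all notions below are
  invariant under isomorphism).\<close>

record graph =
  verts :: "nat set"
  edges :: "nat set"
  src :: "nat \<Rightarrow> nat"
  tgt :: "nat \<Rightarrow> nat"

definition wf_graph :: "graph \<Rightarrow> bool" where
  "wf_graph G \<longleftrightarrow> finite (verts G) \<and> finite (edges G) \<and>
     (\<forall>e\<in>edges G. src G e \<in> verts G \<and> tgt G e \<in> verts G)"

definition graph_iso :: "graph \<Rightarrow> graph \<Rightarrow> bool" where
  "graph_iso G H \<longleftrightarrow> (\<exists>f g. bij_betw f (verts G) (verts H) \<and> bij_betw g (edges G) (edges H) \<and>
     (\<forall>e\<in>edges G. src H (g e) = f (src G e) \<and> tgt H (g e) = f (tgt G e)))"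

definition interior :: "graph \<Rightarrow> nat \<Rightarrow> nat \<Rightarrow> nat set" where
  "interior R v w = verts R - {v, w}"

text \<open>\<open>replace_step R v w G G'\<close>: G' is (up to isomorphism) obtained from G by
  replacing one edge \<open>\<epsilon>\<close> of G: delete \<open>\<epsilon>\<close> and glue in a copy of R, identifying
  v with the initial vertex and w with the terminal vertex of \<open>\<epsilon>\<close>.
  \<open>\<gamma>\<close>, \<open>\<delta>\<close> embed the old vertices/remaining edges, \<open>\<alpha>\<close>, \<open>\<beta>\<close> embed the copy of R.\<close>
definition replace_step :: "graph \<Rightarrow> nat \<Rightarrow> nat \<Rightarrow> graph \<Rightarrow> graph \<Rightarrow> bool" where
  "replace_step R v w G G' \<longleftrightarrow> wf_graph G' \<and>
    (\<exists>\<epsilon>\<in>edges G. \<exists>\<gamma> \<delta> \<alpha> \<beta>.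
       inj_on \<gamma> (verts G) \<and> inj_on \<alpha> (interior R v w) \<and>
       \<gamma> ` verts G \<inter> \<alpha> ` interior R v w = {} \<and>
       verts G' = \<gamma> ` verts G \<union> \<alpha> ` interior R v w \<and>
       \<alpha> v = \<gamma> (src G \<epsilon>) \<and> \<alpha> w = \<gamma> (tgt G \<epsilon>) \<and>
       inj_on \<delta> (edges G - {\<epsilon>}) \<and> inj_on \<beta> (edges R) \<and>
       \<delta> ` (edges G - {\<epsilon>}) \<inter> \<beta> ` edges R = {} \<and>
       edges G' = \<delta> ` (edges G - {\<epsilon>}) \<union> \<beta> ` edges R \<and>
       (\<forall>e\<in>edges G - {\<epsilon>}. src G' (\<delta> e) = \<gamma> (src G e) \<and> tgt G' (\<delta> e) = \<gamma> (tgt G e)) \<and>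
       (\<forall>e\<in>edges R. src G' (\<beta> e) = \<alpha> (src R e) \<and> tgt G' (\<beta> e) = \<alpha> (tgt R e)))"

definition expansion :: "graph \<Rightarrow> nat \<Rightarrow> nat \<Rightarrow> graph \<Rightarrow> graph \<Rightarrow> bool" where
  "expansion R v w G H \<longleftrightarrow> (replace_step R v w)\<^sup>*\<^sup>* G H"

text \<open>\<open>full_step R v w G G'\<close>: G' is (up to isomorphism) obtained from G by
  replacing every edge of G (simultaneously) by a copy of R.\<close>
definition full_step :: "graph \<Rightarrow> nat \<Rightarrow> nat \<Rightarrow> graph \<Rightarrow> graph \<Rightarrow> bool" where
  "full_step R v w G G' \<longleftrightarrow> wf_graph G' \<and>
    (\<exists>\<gamma> (\<alpha>::nat \<Rightarrow> nat \<Rightarrow> nat) (\<beta>::nat \<Rightarrow> nat \<Rightarrow> nat).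
       inj_on \<gamma> (verts G) \<and>
       inj_on (\<lambda>(\<epsilon>, u). \<alpha> \<epsilon> u) (edges G \<times> interior R v w) \<and>
       \<gamma> ` verts G \<inter> (\<lambda>(\<epsilon>, u). \<alpha> \<epsilon> u) ` (edges G \<times> interior R v w) = {} \<and>
       verts G' = \<gamma> ` verts G \<union> (\<lambda>(\<epsilon>, u). \<alpha> \<epsilon> u) ` (edges G \<times> interior R v w) \<and>
       (\<forall>\<epsilon>\<in>edges G. \<alpha> \<epsilon> v = \<gamma> (src G \<epsilon>) \<and> \<alpha> \<epsilon> w = \<gamma> (tgt G \<epsilon>)) \<and>
       inj_on (\<lambda>(\<epsilon>, f). \<beta> \<epsilon> f) (edges G \<times> edges R) \<and>
       edges G' = (\<lambda>(\<epsilon>, f). \<beta> \<epsilon> f) ` (edges G \<times> edges R) \<and>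
       (\<forall>\<epsilon>\<in>edges G. \<forall>f\<in>edges R.
          src G' (\<beta> \<epsilon> f) = \<alpha> \<epsilon> (src R f) \<and> tgt G' (\<beta> \<epsilon> f) = \<alpha> \<epsilon> (tgt R f)))"

text \<open>Degree of a vertex in a directed multigraph (a loop counts twice).\<close>
definition degree :: "graph \<Rightarrow> nat \<Rightarrow> nat" where
  "degree G x = card {e \<in> edges G. src G e = x} + card {e \<in> edges G. tgt G e = x}"

text \<open>Replacement system \<open>(G0, e \<rightarrow> R)\<close> where e is a non-loop edge from v to w,
  and v, w are vertices of R.\<close>
definition replacement_system :: "graph \<Rightarrow> graph \<Rightarrow> nat \<Rightarrow> nat \<Rightarrow> bool" where
  "replacement_system G0 R v w \<longleftrightarrow> wf_graph G0 \<and> wf_graph R \<and>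
     v \<in> verts R \<and> w \<in> verts R \<and> v \<noteq> w"

definition no_isolated :: "graph \<Rightarrow> bool" where
  "no_isolated G \<longleftrightarrow> (\<forall>x\<in>verts G. \<exists>e\<in>edges G. src G e = x \<or> tgt G e = x)"

definition expanding :: "graph \<Rightarrow> graph \<Rightarrow> nat \<Rightarrow> nat \<Rightarrow> bool" where
  "expanding G0 R v w \<longleftrightarrow> no_isolated G0 \<and> no_isolated R \<and>
     \<not> (\<exists>e\<in>edges R. (src R e = v \<and> tgt R e = w) \<or> (src R e = w \<and> tgt R e = v)) \<and>
     card (verts R) \<ge> 3 \<and> card (edges R) \<ge> 2"

text \<open>Finite branching: uniform bound on vertex degrees in all graphs \<open>G_n\<close> of the
  full expansion sequence (each \<open>G_n\<close> is determined up to isomorphism).\<close>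
definition finite_branching :: "graph \<Rightarrow> graph \<Rightarrow> nat \<Rightarrow> nat \<Rightarrow> bool" where
  "finite_branching G0 R v w \<longleftrightarrow>
     (\<exists>B. \<forall>H. (full_step R v w)\<^sup>*\<^sup>* G0 H \<longrightarrow> (\<forall>x\<in>verts H. degree H x \<le> B))"

definition connected_graph :: "graph \<Rightarrow> bool" where
  "connected_graph G \<longleftrightarrow>
     (\<forall>x\<in>verts G. \<forall>y\<in>verts G.
        (\<lambda>a b. \<exists>e\<in>edges G. (src G e = a \<and> tgt G e = b) \<or> (src G e = b \<and> tgt G e = a))\<^sup>*\<^sup>* x y)"

definition graph_family :: "graph \<Rightarrow> graph \<Rightarrow> nat \<Rightarrow> nat \<Rightarrow> graph set" where
  "graph_family G0 R v w = {G. wf_graph G \<and>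
     (\<exists>H H'. expansion R v w G H \<and> expansion R v w G0 H' \<and> graph_iso H H')}"

text \<open>Characteristic map \<open>(f, g)\<close> (vertex map, edge map) for R in G: an
  isomorphism from R, or from \<open>R_loop\<close> (v and w identified, i.e. \<open>f v = f w\<close>),
  onto the subgraph \<open>S = (f ` verts R, g ` edges R)\<close> of G, such that every edge
  of G incident on the image of an interior vertex lies in S.\<close>
definition char_map :: "graph \<Rightarrow> nat \<Rightarrow> nat \<Rightarrow> graph \<Rightarrow> (nat \<Rightarrow> nat) \<Rightarrow> (nat \<Rightarrow> nat) \<Rightarrow> bool" where
  "char_map R v w G f g \<longleftrightarrow>
     f ` verts R \<subseteq> verts G \<and> g ` edges R \<subseteq> edges G \<and> inj_on g (edges R) \<and>
     (inj_on f (verts R) \<or> (f v = f w \<and> inj_on f (verts R - {w}))) \<and>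
     (\<forall>e\<in>edges R. src G (g e) = f (src R e) \<and> tgt G (g e) = f (tgt R e)) \<and>
     (\<forall>u\<in>interior R v w. \<forall>e\<in>edges G. (src G e = f u \<or> tgt G e = f u) \<longrightarrow> e \<in> g ` edges R)"

text \<open>Collapsible subgraph, represented by its (vertex set, edge set); its
  incidence is inherited from G.\<close>
definition collapsible :: "graph \<Rightarrow> nat \<Rightarrow> nat \<Rightarrow> graph \<Rightarrow> nat set \<times> nat set \<Rightarrow> bool" where
  "collapsible R v w G S \<longleftrightarrow> (\<exists>f g. char_map R v w G f g \<and> S = (f ` verts R, g ` edges R))"

end

theory Submission
  imports Defs "HOL-Library.Nat_Bijection" "HOL-Library.FuncSet"
begin


definition stp :: "nat \<Rightarrow> nat \<Rightarrow> nat \<Rightarrow> nat \<Rightarrow> nat \<times> nat \<Rightarrow> nat \<times> nat" where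
  "stp ov iv ow iw p = (fst p * ov + snd p * ow, fst p * iv + snd p * iw)"

definition itv :: "nat \<Rightarrow> nat \<Rightarrow> nat \<Rightarrow> nat \<Rightarrow> nat \<Rightarrow> nat \<times> nat \<Rightarrow> nat \<times> nat" where
  "itv ov iv ow iw n = (stp ov iv ow iw ^^ n)"

lemma itv_Suc: "itv ov iv ow iw (Suc n) x = stp ov iv ow iw (itv ov iv ow iw n x)"
  by (simp add: itv_def)

lemma itv_lin:
  "itv ov iv ow iw n (s,t) =
    (s * fst (itv ov iv ow iw n (1,0)) + t * fst (itv ov iv ow iw n (0,1)),
     s * snd (itv ov iv ow iw n (1,0)) + t * snd (itv ov iv ow iw n (0,1)))"
proof (induction n arbitrary: s t)
  case 0 then show ?case by (simp add: itv_def)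
next
  case (Suc n)
  obtain p1 p2 where p: "itv ov iv ow iw n (1,0) = (p1,p2)" by (cases "itv ov iv ow iw n (1,0)")
  obtain q1 q2 where q: "itv ov iv ow iw n (0,1) = (q1,q2)" by (cases "itv ov iv ow iw n (0,1)")
  have ih: "itv ov iv ow iw n (s,t) = (s*p1+t*q1, s*p2+t*q2)" using Suc.IH[of s t] p q by simp
  show ?case unfolding itv_Suc ih p q by (simp add: stp_def algebra_simps)
qed

lemma itv_mono:
  assumes "s \<ge> s'" "t \<ge> t'"
  shows "fst (itv ov iv ow iw n (s',t')) + snd (itv ov iv ow iw n (s',t')) \<le>
         fst (itv ov iv ow iw n (s,t)) + snd (itv ov iv ow iw n (s,t))"
proof -
  obtain p1 p2 where p: "itv ov iv ow iw n (1,0) = (p1,p2)" by (cases "itv ov iv ow iw n (1,0)")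
  obtain q1 q2 where q: "itv ov iv ow iw n (0,1) = (q1,q2)" by (cases "itv ov iv ow iw n (0,1)")
  have a: "itv ov iv ow iw n (s,t) = (s*p1+t*q1, s*p2+t*q2)" using itv_lin[of ov iv ow iw n s t] p q by simp
  have b: "itv ov iv ow iw n (s',t') = (s'*p1+t'*q1, s'*p2+t'*q2)" using itv_lin[of ov iv ow iw n s' t'] p q by simp
  show ?thesis unfolding a b using assms by (simp add: add_mono mult_right_mono)
qed

lemma weights_exist:
  assumes r1: "ov + iv \<ge> 1" and r2: "ow + iw \<ge> 1"
    and bA: "\<And>n. fst (itv ov iv ow iw n (1,0)) + snd (itv ov iv ow iw n (1,0)) \<le> B"
    and bB: "\<And>n. fst (itv ov iv ow iw n (0,1)) + snd (itv ov iv ow iw n (0,1)) \<le> B"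
  shows "\<exists>wA wB::nat. wA \<ge> 1 \<and> wB \<ge> 1 \<and> wA = ov*wA + iv*wB \<and> wB = ow*wA + iw*wB"
proof -
  define a where "a n = fst (itv ov iv ow iw n (1,0)) + snd (itv ov iv ow iw n (1,0))" for n
  define b where "b n = fst (itv ov iv ow iw n (0,1)) + snd (itv ov iv ow iw n (0,1))" for n
  have e: "itv ov iv ow iw (Suc n) p = itv ov iv ow iw n (stp ov iv ow iw p)" for p n
    by (simp add: itv_def funpow_Suc_right del: funpow.simps)
  have ra: "a (Suc n) = ov * a n + iv * b n" for n
    unfolding a_def b_def e stp_def using itv_lin[of ov iv ow iw n "1*ov+0*ow" "1*iv+0*iw"]
    by (simp add: algebra_simps)
  have rb: "b (Suc n) = ow * a n + iw * b n" for n
    unfolding a_def b_def e stp_def using itv_lin[of ov iv ow iw n "0*ov+1*ow" "0*iv+1*iw"]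
    by (simp add: algebra_simps)
  have a0: "a 0 = 1" "b 0 = 1" by (simp_all add: a_def b_def itv_def)
  have pos: "a n \<ge> 1 \<and> b n \<ge> 1" for n
  proof (induction n)
    case 0 then show ?case using a0 by simp
  next
    case (Suc n)
    have "ov * a n + iv * b n \<ge> ov + iv" using Suc by (simp add: add_mono)
    moreover have "ow * a n + iw * b n \<ge> ow + iw" using Suc by (simp add: add_mono)
    ultimately show ?case using r1 r2 ra rb by simp
  qed
  have boundA: "a n \<le> B" "b n \<le> B" for n using bA bB a_def b_def by auto
  have grow: False if "\<And>n. f (Suc n) \<ge> f n + 1" "\<And>n. f n \<le> B" for f :: "nat \<Rightarrow> nat"
  proof -
    have "f n \<ge> n" for n by (induction n) (use that(1) in \<open>auto intro: le_trans\<close>)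
    then show False using that(2)[of "Suc B"] by (metis not_less_eq_eq)
  qed
  have A: "(ov = 1 \<and> iv = 0) \<or> ov = 0"
  proof (rule ccontr)
    assume "\<not> ?thesis"
    hence "(ov \<ge> 1 \<and> iv \<ge> 1) \<or> ov \<ge> 2" by auto
    hence "a (Suc n) \<ge> a n + 1" for n
    proof
      assume h: "ov \<ge> 1 \<and> iv \<ge> 1"
      have x: "ov * a n \<ge> a n" using h by simp
      have y: "iv * b n \<ge> 1" using h pos[of n] by (simp add: Suc_le_eq)
      show ?thesis unfolding ra using add_mono[OF x y] by simp
    next
      assume h: "ov \<ge> 2"
      have "ov * a n \<ge> 2 * a n" using h by simp
      then show ?thesis unfolding ra using pos[of n] by linarith
    qed
    then show False using grow boundA by blast
  qed
  have Bq: "(iw = 1 \<and> ow = 0) \<or> iw = 0"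
  proof (rule ccontr)
    assume "\<not> ?thesis"
    hence "(iw \<ge> 1 \<and> ow \<ge> 1) \<or> iw \<ge> 2" by auto
    hence "b (Suc n) \<ge> b n + 1" for n
    proof
      assume h: "iw \<ge> 1 \<and> ow \<ge> 1"
      have x: "iw * b n \<ge> b n" using h by simp
      have y: "ow * a n \<ge> 1" using h pos[of n] by (simp add: Suc_le_eq)
      show ?thesis unfolding rb using add_mono[OF y x] by simp
    next
      assume h: "iw \<ge> 2"
      have "iw * b n \<ge> 2 * b n" using h by simp
      then show ?thesis unfolding rb using pos[of n] by linarith
    qed
    then show False using grow boundA by blast
  qed
  show ?thesis
  proof (cases "ov = 1 \<and> iv = 0")
    case True
    note T = True
    show ?thesis
    proof (cases "iw = 1 \<and> ow = 0")
      case True then show ?thesis using T by (intro exI[of _ 1]) auto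
    next
      case False then have "iw = 0" using Bq by auto
      then show ?thesis using T r2 by (intro exI[of _ 1] exI[of _ ow]) auto
    qed
  next
    case False then have ov0: "ov = 0" using A by auto
    show ?thesis
    proof (cases "iw = 1 \<and> ow = 0")
      case True then show ?thesis using ov0 r1 by (intro exI[of _ iv] exI[of _ 1]) auto
    next
      case False then have iw0: "iw = 0" using Bq by auto
      have r2': "a (Suc (Suc n)) = iv * ow * a n" for n using ra rb ov0 iw0 by simp
      have "iv * ow = 1"
      proof (rule ccontr)
        assume "iv * ow \<noteq> 1"
        moreover have "iv * ow \<ge> 1" using r1 r2 ov0 iw0 by simp
        ultimately have "iv * ow \<ge> 2" by linarith
        hence "a (Suc (Suc n)) \<ge> a n + 1" for n
        proof -
          have "iv * ow * a n \<ge> 2 * a n" using \<open>iv * ow \<ge> 2\<close> by (rule mult_right_mono) simp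
          then show ?thesis unfolding r2' using pos[of n] by linarith
        qed
        hence "a (2*(Suc n)) \<ge> a (2*n) + 1" for n by simp
        then show False using grow[of "\<lambda>n. a (2*n)"] boundA by blast
      qed
      then show ?thesis using ov0 iw0 by (intro exI[of _ 1] exI[of _ 1]) auto
    qed
  qed
qed


definition outd :: "graph \<Rightarrow> nat \<Rightarrow> nat" where
  "outd G x = card {e \<in> edges G. src G e = x}"
definition ind :: "graph \<Rightarrow> nat \<Rightarrow> nat" where
  "ind G x = card {e \<in> edges G. tgt G e = x}"

lemma degree_eq: "degree G x = outd G x + ind G x"
  by (simp add: degree_def outd_def ind_def)

definition al :: "graph \<Rightarrow> nat \<Rightarrow> nat \<Rightarrow> graph \<Rightarrow> nat \<Rightarrow> nat \<Rightarrow> nat" where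
  "al R v w G \<epsilon> u = (if u = v then 2 * src G \<epsilon> else if u = w then 2 * tgt G \<epsilon> else 2 * prod_encode (\<epsilon>, u) + 1)"

definition fsG :: "graph \<Rightarrow> nat \<Rightarrow> nat \<Rightarrow> graph \<Rightarrow> graph" where
  "fsG R v w G = \<lparr> verts = (\<lambda>x. 2*x) ` verts G \<union> (\<lambda>(\<epsilon>,u). 2 * prod_encode (\<epsilon>, u) + 1) ` (edges G \<times> interior R v w),
     edges = (\<lambda>(\<epsilon>,f). prod_encode (\<epsilon>, f)) ` (edges G \<times> edges R),
     src = (\<lambda>e. al R v w G (fst (prod_decode e)) (src R (snd (prod_decode e)))),
     tgt = (\<lambda>e. al R v w G (fst (prod_decode e)) (tgt R (snd (prod_decode e)))) \<rparr>"

lemma dbl_neq_sdbl[simp]: "2*(a::nat) \<noteq> Suc (2*b)" "Suc (2*b) \<noteq> 2*(a::nat)"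
  by presburger+

lemma finite_interior: "wf_graph R \<Longrightarrow> finite (interior R v w)"
  by (simp add: interior_def wf_graph_def)

lemma al_in:
  assumes "wf_graph G" "\<epsilon> \<in> edges G" "u \<in> verts R"
  shows "al R v w G \<epsilon> u \<in> verts (fsG R v w G)"
  using assms by (auto simp: al_def fsG_def wf_graph_def interior_def)

lemma fs_wf:
  assumes "wf_graph G" "wf_graph R"
  shows "wf_graph (fsG R v w G)"
  using assms unfolding wf_graph_def
  apply (intro conjI)
  subgoal by (simp add: fsG_def finite_interior[OF assms(2)] wf_graph_def)
  subgoal by (simp add: fsG_def)
  subgoal using al_in[OF assms(1)] by (auto simp: fsG_def wf_graph_def)
  done

lemma fs_full:
  assumes "wf_graph G" "wf_graph R" "v \<noteq> w"
  shows "full_step R v w G (fsG R v w G)"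
  unfolding full_step_def
  apply (rule conjI, rule fs_wf[OF assms(1,2)])
  apply (rule exI[of _ "\<lambda>x. 2*x"], rule exI[of _ "al R v w G"], rule exI[of _ "\<lambda>\<epsilon> f. prod_encode (\<epsilon>, f)"])
  apply (intro conjI)
  subgoal by (auto simp: inj_on_def)
  subgoal by (auto simp: inj_on_def al_def interior_def prod_encode_eq)
  subgoal by (auto simp: al_def interior_def split: if_splits)
  subgoal by (auto simp: fsG_def al_def interior_def image_iff)
  subgoal using assms(3) by (simp add: al_def)
  subgoal by (auto simp: inj_on_def prod_encode_eq)
  subgoal by (simp add: fsG_def)
  subgoal by (simp add: fsG_def)
  done


lemma al_eq2:
  "al R v w G \<epsilon> u = 2*x \<longleftrightarrow> (u = v \<and> src G \<epsilon> = x) \<or> (u \<noteq> v \<and> u = w \<and> tgt G \<epsilon> = x)"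
  by (auto simp: al_def)

lemma card_prod_union:
  assumes "finite A1" "finite B1" "finite A2" "finite B2" "B1 \<inter> B2 = {}"
  shows "card (A1 \<times> B1 \<union> A2 \<times> B2) = card A1 * card B1 + card A2 * card B2"
  using assms by (subst card_Un_disjoint) (auto simp: card_cartesian_product)

lemma fs_set_src:
  assumes "v \<noteq> w"
  shows "{e \<in> edges (fsG R v w G). src (fsG R v w G) e = 2*x} =
        (\<lambda>(\<epsilon>,f). prod_encode (\<epsilon>, f)) ` ({e \<in> edges G. src G e = x} \<times> {f \<in> edges R. src R f = v}
           \<union> {e \<in> edges G. tgt G e = x} \<times> {f \<in> edges R. src R f = w})"
proof (rule set_eqI, rule iffI)
  fix e assume "e \<in> {e \<in> edges (fsG R v w G). src (fsG R v w G) e = 2*x}"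
  then obtain \<epsilon> f where e: "e = prod_encode (\<epsilon>, f)" "\<epsilon> \<in> edges G" "f \<in> edges R"
    and s: "al R v w G \<epsilon> (src R f) = 2*x"
    by (auto simp: fsG_def)
  from s have c: "(src R f = v \<and> src G \<epsilon> = x) \<or> (src R f = w \<and> tgt G \<epsilon> = x)"
    unfolding al_eq2 by blast
  show "e \<in> (\<lambda>(\<epsilon>,f). prod_encode (\<epsilon>, f)) ` ({e \<in> edges G. src G e = x} \<times> {f \<in> edges R. src R f = v}
           \<union> {e \<in> edges G. tgt G e = x} \<times> {f \<in> edges R. src R f = w})"
    apply (rule image_eqI[where x="(\<epsilon>,f)"]) using e c by auto
next
  fix e assume "e \<in> (\<lambda>(\<epsilon>,f). prod_encode (\<epsilon>, f)) ` ({e \<in> edges G. src G e = x} \<times> {f \<in> edges R. src R f = v}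
           \<union> {e \<in> edges G. tgt G e = x} \<times> {f \<in> edges R. src R f = w})"
  then obtain \<epsilon> f where e: "e = prod_encode (\<epsilon>, f)" "\<epsilon> \<in> edges G" "f \<in> edges R"
    and c: "(src R f = v \<and> src G \<epsilon> = x) \<or> (src R f = w \<and> tgt G \<epsilon> = x)" by auto
  have "al R v w G \<epsilon> (src R f) = 2*x" unfolding al_eq2 using c assms by blast
  then show "e \<in> {e \<in> edges (fsG R v w G). src (fsG R v w G) e = 2*x}"
    using e by (simp add: fsG_def)
qed

lemma fs_set_tgt:
  assumes "v \<noteq> w"
  shows "{e \<in> edges (fsG R v w G). tgt (fsG R v w G) e = 2*x} =
        (\<lambda>(\<epsilon>,f). prod_encode (\<epsilon>, f)) ` ({e \<in> edges G. src G e = x} \<times> {f \<in> edges R. tgt R f = v}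
           \<union> {e \<in> edges G. tgt G e = x} \<times> {f \<in> edges R. tgt R f = w})"
proof (rule set_eqI, rule iffI)
  fix e assume "e \<in> {e \<in> edges (fsG R v w G). tgt (fsG R v w G) e = 2*x}"
  then obtain \<epsilon> f where e: "e = prod_encode (\<epsilon>, f)" "\<epsilon> \<in> edges G" "f \<in> edges R"
    and s: "al R v w G \<epsilon> (tgt R f) = 2*x"
    by (auto simp: fsG_def)
  from s have c: "(tgt R f = v \<and> src G \<epsilon> = x) \<or> (tgt R f = w \<and> tgt G \<epsilon> = x)"
    unfolding al_eq2 by blast
  show "e \<in> (\<lambda>(\<epsilon>,f). prod_encode (\<epsilon>, f)) ` ({e \<in> edges G. src G e = x} \<times> {f \<in> edges R. tgt R f = v}
           \<union> {e \<in> edges G. tgt G e = x} \<times> {f \<in> edges R. tgt R f = w})"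
    apply (rule image_eqI[where x="(\<epsilon>,f)"]) using e c by auto
next
  fix e assume "e \<in> (\<lambda>(\<epsilon>,f). prod_encode (\<epsilon>, f)) ` ({e \<in> edges G. src G e = x} \<times> {f \<in> edges R. tgt R f = v}
           \<union> {e \<in> edges G. tgt G e = x} \<times> {f \<in> edges R. tgt R f = w})"
  then obtain \<epsilon> f where e: "e = prod_encode (\<epsilon>, f)" "\<epsilon> \<in> edges G" "f \<in> edges R"
    and c: "(tgt R f = v \<and> src G \<epsilon> = x) \<or> (tgt R f = w \<and> tgt G \<epsilon> = x)" by auto
  have "al R v w G \<epsilon> (tgt R f) = 2*x" unfolding al_eq2 using c assms by blast
  then show "e \<in> {e \<in> edges (fsG R v w G). tgt (fsG R v w G) e = 2*x}"
    using e by (simp add: fsG_def)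
qed

lemma fs_outd:
  assumes "wf_graph G" "wf_graph R" "v \<noteq> w"
  shows "outd (fsG R v w G) (2*x) = outd G x * outd R v + ind G x * outd R w"
proof -
  have "outd (fsG R v w G) (2*x) = card ({e \<in> edges G. src G e = x} \<times> {f \<in> edges R. src R f = v}
           \<union> {e \<in> edges G. tgt G e = x} \<times> {f \<in> edges R. src R f = w})"
    unfolding outd_def fs_set_src[OF assms(3)]
    by (rule card_image) (auto simp: inj_on_def)
  also have "\<dots> = outd G x * outd R v + ind G x * outd R w"
    unfolding outd_def ind_def using assms by (intro card_prod_union) (auto simp: wf_graph_def)
  finally show ?thesis .
qed

lemma fs_ind:
  assumes "wf_graph G" "wf_graph R" "v \<noteq> w"
  shows "ind (fsG R v w G) (2*x) = outd G x * ind R v + ind G x * ind R w"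
proof -
  have "ind (fsG R v w G) (2*x) = card ({e \<in> edges G. src G e = x} \<times> {f \<in> edges R. tgt R f = v}
           \<union> {e \<in> edges G. tgt G e = x} \<times> {f \<in> edges R. tgt R f = w})"
    unfolding ind_def fs_set_tgt[OF assms(3)]
    by (rule card_image) (auto simp: inj_on_def)
  also have "\<dots> = outd G x * ind R v + ind G x * ind R w"
    unfolding outd_def ind_def using assms by (intro card_prod_union) (auto simp: wf_graph_def)
  finally show ?thesis .
qed


definition Gs :: "graph \<Rightarrow> nat \<Rightarrow> nat \<Rightarrow> graph \<Rightarrow> nat \<Rightarrow> graph" where
  "Gs R v w G0 n = (fsG R v w ^^ n) G0"

lemma Gs_Suc: "Gs R v w G0 (Suc n) = fsG R v w (Gs R v w G0 n)"
  by (simp add: Gs_def)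

lemma Gs_wf: "wf_graph G0 \<Longrightarrow> wf_graph R \<Longrightarrow> wf_graph (Gs R v w G0 n)"
  by (induction n) (auto simp: Gs_Suc Gs_def[of _ _ _ _ 0] intro: fs_wf)

lemma Gs_reach: "wf_graph G0 \<Longrightarrow> wf_graph R \<Longrightarrow> v \<noteq> w \<Longrightarrow> (full_step R v w)\<^sup>*\<^sup>* G0 (Gs R v w G0 n)"
proof (induction n)
  case 0 then show ?case by (simp add: Gs_def)
next
  case (Suc n)
  show ?case unfolding Gs_Suc
    by (rule rtranclp.rtrancl_into_rtrancl[OF Suc.IH[OF Suc.prems] fs_full[OF Gs_wf[OF Suc.prems(1,2)] Suc.prems(2,3)]])
qed

lemma Gs_vert: "x \<in> verts G0 \<Longrightarrow> 2^n * x \<in> verts (Gs R v w G0 n)"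
  by (induction n) (auto simp: Gs_Suc Gs_def[of _ _ _ _ 0] fsG_def mult.assoc)

lemma Gs_deg:
  assumes "wf_graph G0" "wf_graph R" "v \<noteq> w"
  shows "(outd (Gs R v w G0 n) (2^n * x), ind (Gs R v w G0 n) (2^n * x)) =
         itv (outd R v) (ind R v) (outd R w) (ind R w) n (outd G0 x, ind G0 x)"
proof (induction n)
  case 0 then show ?case by (simp add: Gs_def itv_def)
next
  case (Suc n)
  have e: "2 ^ Suc n * x = 2 * (2^n * x)" by simp
  show ?case unfolding Gs_Suc itv_Suc e fs_outd[OF Gs_wf[OF assms(1,2)] assms(2,3)]
    fs_ind[OF Gs_wf[OF assms(1,2)] assms(2,3)] Suc.IH[symmetric] by (simp add: stp_def)
qed

lemma card_pos_mem: "finite A \<Longrightarrow> a \<in> A \<Longrightarrow> card A \<ge> 1"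
  using card_0_eq by fastforce

lemma weights_from_fb:
  assumes rs: "replacement_system G0 R v w" and ex: "expanding G0 R v w"
    and fb: "finite_branching G0 R v w" and ne: "edges G0 \<noteq> {}"
  shows "\<exists>wA wB::nat. wA \<ge> 1 \<and> wB \<ge> 1 \<and> wA = outd R v * wA + ind R v * wB \<and>
            wB = outd R w * wA + ind R w * wB"
proof -
  have wf0: "wf_graph G0" and wfR: "wf_graph R" and vR: "v \<in> verts R" and wR: "w \<in> verts R"
    and vw: "v \<noteq> w" using rs by (auto simp: replacement_system_def)
  obtain B where B: "\<And>H. (full_step R v w)\<^sup>*\<^sup>* G0 H \<Longrightarrow> \<forall>x\<in>verts H. degree H x \<le> B"
    using fb unfolding finite_branching_def by blast
  let ?it = "itv (outd R v) (ind R v) (outd R w) (ind R w)"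
  have bd: "fst (?it n (outd G0 x, ind G0 x)) + snd (?it n (outd G0 x, ind G0 x)) \<le> B"
    if "x \<in> verts G0" for x n
  proof -
    have "degree (Gs R v w G0 n) (2^n * x) \<le> B"
      using B[OF Gs_reach[OF wf0 wfR vw, of n]] Gs_vert[OF that, of n R v w] by blast
    moreover have "fst (?it n (outd G0 x, ind G0 x)) = outd (Gs R v w G0 n) (2^n * x)"
      using arg_cong[OF Gs_deg[OF wf0 wfR vw, of n x], of fst] by simp
    moreover have "snd (?it n (outd G0 x, ind G0 x)) = ind (Gs R v w G0 n) (2^n * x)"
      using arg_cong[OF Gs_deg[OF wf0 wfR vw, of n x], of snd] by simp
    ultimately show ?thesis unfolding degree_eq by simp
  qed
  obtain \<epsilon> where \<epsilon>: "\<epsilon> \<in> edges G0" using ne by blast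
  have fin0: "finite (edges G0)" using wf0 by (simp add: wf_graph_def)
  have s0: "src G0 \<epsilon> \<in> verts G0" "tgt G0 \<epsilon> \<in> verts G0" using wf0 \<epsilon> by (auto simp: wf_graph_def)
  have o1: "outd G0 (src G0 \<epsilon>) \<ge> 1" unfolding outd_def
    by (rule card_pos_mem[of _ \<epsilon>]) (use fin0 \<epsilon> in auto)
  have i1: "ind G0 (tgt G0 \<epsilon>) \<ge> 1" unfolding ind_def
    by (rule card_pos_mem[of _ \<epsilon>]) (use fin0 \<epsilon> in auto)
  have bA: "fst (?it n (1,0)) + snd (?it n (1,0)) \<le> B" for n
    by (rule le_trans[OF itv_mono bd[OF s0(1), of n]]) (use o1 in auto)
  have bB: "fst (?it n (0,1)) + snd (?it n (0,1)) \<le> B" for n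
    by (rule le_trans[OF itv_mono bd[OF s0(2), of n]]) (use i1 in auto)
  have finR: "finite (edges R)" using wfR by (simp add: wf_graph_def)
  have nis: "no_isolated R" using ex unfolding expanding_def by blast
  have r: "outd R u + ind R u \<ge> 1" if "u \<in> verts R" for u
  proof -
    have "\<exists>e\<in>edges R. src R e = u \<or> tgt R e = u" using nis that unfolding no_isolated_def by simp
    then obtain e where e: "e \<in> edges R" "src R e = u \<or> tgt R e = u" by blast
    have f1: "finite {e \<in> edges R. src R e = u}" "finite {e \<in> edges R. tgt R e = u}" using finR by auto
    from e(2) show ?thesis
    proof
      assume h: "src R e = u"
      have "e \<in> {e \<in> edges R. src R e = u}" using e(1) h by simp
      then have "outd R u \<ge> 1" unfolding outd_def by (rule card_pos_mem[OF f1(1)])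
      then show ?thesis by simp
    next
      assume h: "tgt R e = u"
      have "e \<in> {e \<in> edges R. tgt R e = u}" using e(1) h by simp
      then have "ind R u \<ge> 1" unfolding ind_def by (rule card_pos_mem[OF f1(2)])
      then show ?thesis by simp
    qed
  qed
  show ?thesis by (rule weights_exist[OF r[OF vR] r[OF wR] bA bB])
qed


lemma card_ge1: "finite A \<Longrightarrow> a \<in> A \<Longrightarrow> card A \<ge> 1"
  using card_0_eq by fastforce

lemma card_split:
  assumes EG': "EG' = \<delta> ` (E - {\<epsilon>}) \<union> \<beta> ` ER" and dis: "\<delta> ` (E - {\<epsilon>}) \<inter> \<beta> ` ER = {}"
    and i1: "inj_on \<delta> (E - {\<epsilon>})" and i2: "inj_on \<beta> ER" and fE: "finite E" and fR: "finite ER"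
    and s1: "\<forall>e\<in>E-{\<epsilon>}. sG' (\<delta> e) = \<gamma> (sG e)" and s2: "\<forall>f\<in>ER. sG' (\<beta> f) = \<alpha> (sR f)"
  shows "card {e\<in>EG'. sG' e = y} = card {e\<in>E-{\<epsilon>}. \<gamma> (sG e) = y} + card {f\<in>ER. \<alpha> (sR f) = y}"
proof -
  have "{e\<in>EG'. sG' e = y} = \<delta> ` {e\<in>E-{\<epsilon>}. \<gamma> (sG e) = y} \<union> \<beta> ` {f\<in>ER. \<alpha> (sR f) = y}"
    using s1 s2 unfolding EG' by auto
  also have "card \<dots> = card (\<delta> ` {e\<in>E-{\<epsilon>}. \<gamma> (sG e) = y}) + card (\<beta> ` {f\<in>ER. \<alpha> (sR f) = y})"
    by (rule card_Un_disjoint) (use fE fR dis in auto)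
  also have "\<dots> = card {e\<in>E-{\<epsilon>}. \<gamma> (sG e) = y} + card {f\<in>ER. \<alpha> (sR f) = y}"
  proof -
    have "inj_on \<delta> {e\<in>E-{\<epsilon>}. \<gamma> (sG e) = y}" by (rule inj_on_subset[OF i1]) auto
    moreover have "inj_on \<beta> {f\<in>ER. \<alpha> (sR f) = y}" by (rule inj_on_subset[OF i2]) auto
    ultimately show ?thesis by (simp add: card_image)
  qed
  finally show ?thesis .
qed

lemma card_old:
  assumes "inj_on \<gamma> V" "\<forall>e\<in>E. sG e \<in> V" "x \<in> V" "finite E" "\<epsilon> \<in> E"
  shows "card {e\<in>E-{\<epsilon>}. \<gamma> (sG e) = \<gamma> x} + (if sG \<epsilon> = x then 1 else 0) = card {e\<in>E. sG e = x}"
proof -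
  have eq: "{e\<in>E-{\<epsilon>}. \<gamma> (sG e) = \<gamma> x} = {e\<in>E. sG e = x} - {\<epsilon>}"
    using assms(1,2,3) by (auto simp: inj_on_def)
  show ?thesis
  proof (cases "sG \<epsilon> = x")
    case True
    have "card {e\<in>E. sG e = x} \<ge> 1" using assms(4,5) True
      by (intro card_ge1[of _ \<epsilon>]) auto
    moreover have "card ({e\<in>E. sG e = x} - {\<epsilon>}) = card {e\<in>E. sG e = x} - 1"
      using True assms(4,5) by (simp add: card_Diff_singleton)
    ultimately show ?thesis using True eq by simp
  next
    case False
    then have "{e\<in>E. sG e = x} - {\<epsilon>} = {e\<in>E. sG e = x}" by auto
    then show ?thesis using False eq by simp
  qed
qed

lemma card_new_old:
  assumes inj: "inj_on \<gamma> V" and ia: "inj_on \<alpha> I" and dis: "\<gamma> ` V \<inter> \<alpha> ` I = {}"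
    and I: "I = VR - {v, w}" and vw: "v \<noteq> w" and av: "\<alpha> v = \<gamma> a" "\<alpha> w = \<gamma> b"
    and ab: "a \<in> V" "b \<in> V" and x: "x \<in> V" and sR: "\<forall>f\<in>ER. sR f \<in> VR" and fR: "finite ER"
  shows "card {f\<in>ER. \<alpha> (sR f) = \<gamma> x} =
    (if a = x then card {f\<in>ER. sR f = v} else 0) + (if b = x then card {f\<in>ER. sR f = w} else 0)"
proof -
  have "{f\<in>ER. \<alpha> (sR f) = \<gamma> x} = {f\<in>ER. sR f = v \<and> a = x} \<union> {f\<in>ER. sR f = w \<and> b = x}"
  proof (rule set_eqI, rule iffI)
    fix f assume f: "f \<in> {f\<in>ER. \<alpha> (sR f) = \<gamma> x}"
    show "f \<in> {f\<in>ER. sR f = v \<and> a = x} \<union> {f\<in>ER. sR f = w \<and> b = x}"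
    proof (cases "sR f = v")
      case True then have "\<gamma> a = \<gamma> x" using f av by simp
      then have "a = x" using inj ab x by (auto simp: inj_on_def)
      then show ?thesis using f True by simp
    next
      case F1: False
      show ?thesis
      proof (cases "sR f = w")
        case True then have "\<gamma> b = \<gamma> x" using f av by simp
        then have "b = x" using inj ab x by (auto simp: inj_on_def)
        then show ?thesis using f True by simp
      next
        case False
        then have "sR f \<in> I" using F1 sR f I by auto
        then have "\<alpha> (sR f) \<in> \<alpha> ` I" by simp
        moreover have "\<alpha> (sR f) \<in> \<gamma> ` V" using f x by auto
        ultimately show ?thesis using dis by blast
      qed
    qed
  next
    fix f assume "f \<in> {f\<in>ER. sR f = v \<and> a = x} \<union> {f\<in>ER. sR f = w \<and> b = x}"
    then show "f \<in> {f\<in>ER. \<alpha> (sR f) = \<gamma> x}" using av by auto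
  qed
  also have "card \<dots> = card {f\<in>ER. sR f = v \<and> a = x} + card {f\<in>ER. sR f = w \<and> b = x}"
    by (rule card_Un_disjoint) (use fR vw in auto)
  also have "\<dots> = (if a = x then card {f\<in>ER. sR f = v} else 0) + (if b = x then card {f\<in>ER. sR f = w} else 0)"
    by auto
  finally show ?thesis .
qed

lemma card_new_new:
  assumes ia: "inj_on \<alpha> I" and dis: "\<gamma> ` V \<inter> \<alpha> ` I = {}"
    and I: "I = VR - {v, w}" and av: "\<alpha> v = \<gamma> a" "\<alpha> w = \<gamma> b"
    and ab: "a \<in> V" "b \<in> V" and u: "u \<in> I" and sR: "\<forall>f\<in>ER. sR f \<in> VR"
  shows "{f\<in>ER. \<alpha> (sR f) = \<alpha> u} = {f\<in>ER. sR f = u}"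
proof (rule set_eqI, rule iffI)
  fix f assume f: "f \<in> {f\<in>ER. \<alpha> (sR f) = \<alpha> u}"
  have "sR f \<in> I"
  proof (rule ccontr)
    assume "sR f \<notin> I"
    then have "sR f = v \<or> sR f = w" using sR f I by auto
    then have "\<alpha> u \<in> \<gamma> ` V" using f av ab by auto
    then show False using dis u by blast
  qed
  then show "f \<in> {f\<in>ER. sR f = u}" using f ia u by (auto simp: inj_on_def)
next
  fix f assume "f \<in> {f\<in>ER. sR f = u}" then show "f \<in> {f\<in>ER. \<alpha> (sR f) = \<alpha> u}" by auto
qed

lemma card_old_new:
  assumes dis: "\<gamma> ` V \<inter> \<alpha> ` I = {}" and u: "u \<in> I" and sG: "\<forall>e\<in>E. sG e \<in> V"
  shows "{e\<in>E-{\<epsilon>}. \<gamma> (sG e) = \<alpha> u} = {}"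
  using assms by blast

definition Dw :: "nat \<Rightarrow> nat \<Rightarrow> graph \<Rightarrow> nat \<Rightarrow> nat" where
  "Dw wA wB G x = wA * outd G x + wB * ind G x"

lemma rs_D:
  assumes rs: "replace_step R v w G G'" and wfG: "wf_graph G" and wfR: "wf_graph R" and vw: "v \<noteq> w"
    and hA: "wA = outd R v * wA + ind R v * wB" and hB: "wB = outd R w * wA + ind R w * wB"
  shows "(\<forall>x\<in>verts G. \<exists>y\<in>verts G'. Dw wA wB G' y = Dw wA wB G x) \<and>
         (\<forall>y\<in>verts G'. (\<exists>x\<in>verts G. Dw wA wB G' y = Dw wA wB G x) \<or>
                        (\<exists>u\<in>interior R v w. Dw wA wB G' y = Dw wA wB R u))"
proof -
  obtain \<epsilon> \<gamma> \<delta> \<alpha> \<beta> where \<epsilon>: "\<epsilon> \<in> edges G"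
    and h: "inj_on \<gamma> (verts G) \<and> inj_on \<alpha> (interior R v w) \<and>
       \<gamma> ` verts G \<inter> \<alpha> ` interior R v w = {} \<and>
       verts G' = \<gamma> ` verts G \<union> \<alpha> ` interior R v w \<and>
       \<alpha> v = \<gamma> (src G \<epsilon>) \<and> \<alpha> w = \<gamma> (tgt G \<epsilon>) \<and>
       inj_on \<delta> (edges G - {\<epsilon>}) \<and> inj_on \<beta> (edges R) \<and>
       \<delta> ` (edges G - {\<epsilon>}) \<inter> \<beta> ` edges R = {} \<and>
       edges G' = \<delta> ` (edges G - {\<epsilon>}) \<union> \<beta> ` edges R \<and>
       (\<forall>e\<in>edges G - {\<epsilon>}. src G' (\<delta> e) = \<gamma> (src G e) \<and> tgt G' (\<delta> e) = \<gamma> (tgt G e)) \<and>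
       (\<forall>e\<in>edges R. src G' (\<beta> e) = \<alpha> (src R e) \<and> tgt G' (\<beta> e) = \<alpha> (tgt R e))"
    using rs unfolding replace_step_def by (elim conjE bexE exE) blast
  have ig: "inj_on \<gamma> (verts G)" using h by (elim conjE) (assumption+)
  have ia: "inj_on \<alpha> (interior R v w)" using h by (elim conjE) (assumption+)
  have dis: "\<gamma> ` verts G \<inter> \<alpha> ` interior R v w = {}" using h by (elim conjE) (assumption+)
  have VG': "verts G' = \<gamma> ` verts G \<union> \<alpha> ` interior R v w" using h by (elim conjE) (assumption+)
  have av: "\<alpha> v = \<gamma> (src G \<epsilon>)" using h by (elim conjE) (assumption+)
  have aw: "\<alpha> w = \<gamma> (tgt G \<epsilon>)" using h by (elim conjE) (assumption+)
  have id: "inj_on \<delta> (edges G - {\<epsilon>})" using h by (elim conjE) (assumption+)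
  have ib: "inj_on \<beta> (edges R)" using h by (elim conjE) (assumption+)
  have dis2: "\<delta> ` (edges G - {\<epsilon>}) \<inter> \<beta> ` edges R = {}" using h by (elim conjE) (assumption+)
  have EG': "edges G' = \<delta> ` (edges G - {\<epsilon>}) \<union> \<beta> ` edges R" using h by (elim conjE) (assumption+)
  have s1: "\<forall>e\<in>edges G - {\<epsilon>}. src G' (\<delta> e) = \<gamma> (src G e) \<and> tgt G' (\<delta> e) = \<gamma> (tgt G e)" using h by (elim conjE) (assumption+)
  have s2: "\<forall>e\<in>edges R. src G' (\<beta> e) = \<alpha> (src R e) \<and> tgt G' (\<beta> e) = \<alpha> (tgt R e)" using h by (elim conjE) (assumption+)
  have fE: "finite (edges G)" and fR: "finite (edges R)" using wfG wfR by (auto simp: wf_graph_def)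
  have sG: "\<forall>e\<in>edges G. src G e \<in> verts G" "\<forall>e\<in>edges G. tgt G e \<in> verts G"
    and sR: "\<forall>e\<in>edges R. src R e \<in> verts R" "\<forall>e\<in>edges R. tgt R e \<in> verts R"
    using wfG wfR by (auto simp: wf_graph_def)
  have ab: "src G \<epsilon> \<in> verts G" "tgt G \<epsilon> \<in> verts G" using sG \<epsilon> by auto
  have Idef: "interior R v w = verts R - {v, w}" by (simp add: interior_def)
  have os: "outd G' y = card {e\<in>edges G-{\<epsilon>}. \<gamma> (src G e) = y} + card {f\<in>edges R. \<alpha> (src R f) = y}" for y
    unfolding outd_def by (rule card_split[OF EG' dis2 id ib fE fR]) (use s1 s2 in auto)
  have ins: "ind G' y = card {e\<in>edges G-{\<epsilon>}. \<gamma> (tgt G e) = y} + card {f\<in>edges R. \<alpha> (tgt R f) = y}" for y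
    unfolding ind_def by (rule card_split[OF EG' dis2 id ib fE fR]) (use s1 s2 in auto)
  have old: "Dw wA wB G' (\<gamma> x) = Dw wA wB G x" if x: "x \<in> verts G" for x
  proof -
    define c1 where "c1 = card {e\<in>edges G-{\<epsilon>}. \<gamma> (src G e) = \<gamma> x}"
    define c2 where "c2 = card {e\<in>edges G-{\<epsilon>}. \<gamma> (tgt G e) = \<gamma> x}"
    define S where "S \<longleftrightarrow> src G \<epsilon> = x"
    define T where "T \<longleftrightarrow> tgt G \<epsilon> = x"
    have o1: "outd G x = c1 + (if S then 1 else 0)" unfolding c1_def S_def outd_def
      using card_old[OF ig sG(1) x fE \<epsilon>] by simp
    have i1: "ind G x = c2 + (if T then 1 else 0)" unfolding c2_def T_def ind_def
      using card_old[OF ig sG(2) x fE \<epsilon>] by simp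
    have o2: "outd G' (\<gamma> x) = c1 + ((if S then outd R v else 0) + (if T then outd R w else 0))"
      using os[of "\<gamma> x"] card_new_old[OF ig ia dis Idef vw av aw ab x sR(1) fR]
      unfolding c1_def S_def T_def outd_def[of R] by simp
    have i2: "ind G' (\<gamma> x) = c2 + ((if S then ind R v else 0) + (if T then ind R w else 0))"
      using ins[of "\<gamma> x"] card_new_old[OF ig ia dis Idef vw av aw ab x sR(2) fR]
      unfolding c2_def S_def T_def ind_def[of R] by simp
    have eA: "wA * outd R v + wB * ind R v = wA" using hA by (simp add: mult.commute)
    have eB: "wA * outd R w + wB * ind R w = wB" using hB by (simp add: mult.commute)
    show ?thesis unfolding Dw_def o1 i1 o2 i2
      using eA eB by (cases S; cases T) (simp_all add: algebra_simps)
  qed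
  have new: "Dw wA wB G' (\<alpha> u) = Dw wA wB R u" if u: "u \<in> interior R v w" for u
  proof -
    have "outd G' (\<alpha> u) = outd R u" using os[of "\<alpha> u"] unfolding outd_def[of R]
      card_old_new[OF dis u sG(1)] card_new_new[OF ia dis Idef av aw ab u sR(1)] by simp
    moreover have "ind G' (\<alpha> u) = ind R u" using ins[of "\<alpha> u"] unfolding ind_def[of R]
      card_old_new[OF dis u sG(2)] card_new_new[OF ia dis Idef av aw ab u sR(2)] by simp
    ultimately show ?thesis by (simp add: Dw_def)
  qed
  show ?thesis
  proof (intro conjI ballI)
    fix x assume "x \<in> verts G" then show "\<exists>y\<in>verts G'. Dw wA wB G' y = Dw wA wB G x"
      using old VG' by blast
  next
    fix y assume "y \<in> verts G'"
    then show "(\<exists>x\<in>verts G. Dw wA wB G' y = Dw wA wB G x) \<or> (\<exists>u\<in>interior R v w. Dw wA wB G' y = Dw wA wB R u)"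
      unfolding VG' using old new by blast
  qed
qed


lemma rs_wf: "replace_step R v w G G' \<Longrightarrow> wf_graph G'"
  by (simp add: replace_step_def)

lemma exp_persist:
  assumes "expansion R v w G H" "wf_graph G" "wf_graph R" "v \<noteq> w"
    and hA: "wA = outd R v * wA + ind R v * wB" and hB: "wB = outd R w * wA + ind R w * wB"
  shows "wf_graph H \<and> (\<forall>x\<in>verts G. \<exists>y\<in>verts H. Dw wA wB H y = Dw wA wB G x)"
  using assms(1) unfolding expansion_def
proof (induction rule: rtranclp_induct)
  case base then show ?case using assms(2) by blast
next
  case (step y z)
  have wz: "wf_graph z" using step.hyps(2) by (rule rs_wf)
  have A: "\<forall>x\<in>verts y. \<exists>y'\<in>verts z. Dw wA wB z y' = Dw wA wB y x"
    using rs_D[OF step.hyps(2) _ assms(3,4) hA hB] step.IH by blast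
  show ?case
  proof (intro conjI ballI)
    show "wf_graph z" by (rule wz)
  next
    fix x assume "x \<in> verts G"
    then obtain y1 where "y1 \<in> verts y" "Dw wA wB y y1 = Dw wA wB G x" using step.IH by blast
    then show "\<exists>y'\<in>verts z. Dw wA wB z y' = Dw wA wB G x" using A by metis
  qed
qed

lemma exp_bound:
  assumes "expansion R v w G0 H" "wf_graph G0" "wf_graph R" "v \<noteq> w"
    and hA: "wA = outd R v * wA + ind R v * wB" and hB: "wB = outd R w * wA + ind R w * wB"
    and K0: "\<forall>x\<in>verts G0. Dw wA wB G0 x \<le> K" and KR: "\<forall>u\<in>interior R v w. Dw wA wB R u \<le> K"
  shows "wf_graph H \<and> (\<forall>y\<in>verts H. Dw wA wB H y \<le> K)"
  using assms(1) unfolding expansion_def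
proof (induction rule: rtranclp_induct)
  case base then show ?case using assms(2) K0 by blast
next
  case (step y z)
  have wz: "wf_graph z" using step.hyps(2) by (rule rs_wf)
  have A: "\<forall>y'\<in>verts z. (\<exists>x\<in>verts y. Dw wA wB z y' = Dw wA wB y x) \<or>
                        (\<exists>u\<in>interior R v w. Dw wA wB z y' = Dw wA wB R u)"
    using rs_D[OF step.hyps(2) _ assms(3,4) hA hB] step.IH by blast
  show ?case
  proof (intro conjI ballI)
    show "wf_graph z" by (rule wz)
  next
    fix y' assume "y' \<in> verts z"
    then show "Dw wA wB z y' \<le> K" using A step.IH KR by fastforce
  qed
qed

lemma iso_D:
  assumes "graph_iso H H'" "wf_graph H" "wf_graph H'" "x \<in> verts H"
  shows "\<exists>y\<in>verts H'. Dw wA wB H' y = Dw wA wB H x"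
proof -
  obtain f g where f: "bij_betw f (verts H) (verts H')" and g: "bij_betw g (edges H) (edges H')"
    and c: "\<forall>e\<in>edges H. src H' (g e) = f (src H e) \<and> tgt H' (g e) = f (tgt H e)"
    using assms(1) unfolding graph_iso_def by blast
  have fi: "inj_on f (verts H)" and gi: "inj_on g (edges H)" and gE: "g ` edges H = edges H'"
    using f g by (auto simp: bij_betw_def)
  have sH: "\<forall>e\<in>edges H. src H e \<in> verts H \<and> tgt H e \<in> verts H" using assms(2) by (simp add: wf_graph_def)
  have o: "{e\<in>edges H'. src H' e = f x} = g ` {e\<in>edges H. src H e = x}"
  proof (rule set_eqI, rule iffI)
    fix e' assume "e' \<in> {e\<in>edges H'. src H' e = f x}"
    then have "e' \<in> g ` edges H" "src H' e' = f x" using gE by auto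
    then obtain e where e: "e \<in> edges H" "e' = g e" "src H' (g e) = f x" by blast
    then have "f (src H e) = f x" using c by auto
    then have "src H e = x" using fi sH e(1) assms(4) by (auto simp: inj_on_def)
    then show "e' \<in> g ` {e\<in>edges H. src H e = x}" using e by auto
  next
    fix e' assume "e' \<in> g ` {e\<in>edges H. src H e = x}"
    then show "e' \<in> {e\<in>edges H'. src H' e = f x}" using c gE by auto
  qed
  have i: "{e\<in>edges H'. tgt H' e = f x} = g ` {e\<in>edges H. tgt H e = x}"
  proof (rule set_eqI, rule iffI)
    fix e' assume "e' \<in> {e\<in>edges H'. tgt H' e = f x}"
    then have "e' \<in> g ` edges H" "tgt H' e' = f x" using gE by auto
    then obtain e where e: "e \<in> edges H" "e' = g e" "tgt H' (g e) = f x" by blast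
    then have "f (tgt H e) = f x" using c by auto
    then have "tgt H e = x" using fi sH e(1) assms(4) by (auto simp: inj_on_def)
    then show "e' \<in> g ` {e\<in>edges H. tgt H e = x}" using e by auto
  next
    fix e' assume "e' \<in> g ` {e\<in>edges H. tgt H e = x}"
    then show "e' \<in> {e\<in>edges H'. tgt H' e = f x}" using c gE by auto
  qed
  have "outd H' (f x) = outd H x" unfolding outd_def o
    by (rule card_image) (rule inj_on_subset[OF gi], auto)
  moreover have "ind H' (f x) = ind H x" unfolding ind_def i
    by (rule card_image) (rule inj_on_subset[OF gi], auto)
  moreover have "f x \<in> verts H'" using f assms(4) by (auto simp: bij_betw_def)
  ultimately show ?thesis unfolding Dw_def by (intro bexI[of _ "f x"]) auto
qed

lemma deg_le_Dw: "wA \<ge> 1 \<Longrightarrow> wB \<ge> 1 \<Longrightarrow> degree G x \<le> Dw wA wB G x"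
  unfolding degree_eq Dw_def by (intro add_mono) auto

lemma family_deg_bound:
  assumes rs: "replacement_system G0 R v w" and ex: "expanding G0 R v w"
    and fb: "finite_branching G0 R v w" and ne: "edges G0 \<noteq> {}"
  shows "\<exists>K. \<forall>G\<in>graph_family G0 R v w. \<forall>x\<in>verts G. degree G x \<le> K"
proof -
  have wf0: "wf_graph G0" and wfR: "wf_graph R" and vw: "v \<noteq> w"
    using rs by (auto simp: replacement_system_def)
  obtain wA wB where w1: "wA \<ge> 1" "wB \<ge> 1" and hA: "wA = outd R v * wA + ind R v * wB"
    and hB: "wB = outd R w * wA + ind R w * wB"
    using weights_from_fb[OF rs ex fb ne] by blast
  define K where "K = Max (Dw wA wB G0 ` verts G0 \<union> Dw wA wB R ` interior R v w)"
  have fin: "finite (Dw wA wB G0 ` verts G0 \<union> Dw wA wB R ` interior R v w)"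
    using wf0 finite_interior[OF wfR] by (simp add: wf_graph_def)
  have K0: "\<forall>x\<in>verts G0. Dw wA wB G0 x \<le> K" and KR: "\<forall>u\<in>interior R v w. Dw wA wB R u \<le> K"
    unfolding K_def using fin by (auto intro: Max_ge)
  show ?thesis
  proof (intro exI ballI)
    fix G x assume G: "G \<in> graph_family G0 R v w" and x: "x \<in> verts G"
    obtain H H' where wfG: "wf_graph G" and e1: "expansion R v w G H" and e2: "expansion R v w G0 H'"
      and iso: "graph_iso H H'" using G unfolding graph_family_def by blast
    have p1: "wf_graph H \<and> (\<forall>x\<in>verts G. \<exists>y\<in>verts H. Dw wA wB H y = Dw wA wB G x)"
      by (rule exp_persist[OF e1 wfG wfR vw hA hB])
    have p2: "wf_graph H' \<and> (\<forall>y\<in>verts H'. Dw wA wB H' y \<le> K)"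
      by (rule exp_bound[OF e2 wf0 wfR vw hA hB K0 KR])
    obtain y where y: "y \<in> verts H" "Dw wA wB H y = Dw wA wB G x" using p1 x by blast
    obtain z where z: "z \<in> verts H'" "Dw wA wB H' z = Dw wA wB H y"
      using iso_D[OF iso _ _ y(1)] p1 p2 by blast
    have "degree G x \<le> Dw wA wB G x" by (rule deg_le_Dw[OF w1])
    also have "\<dots> = Dw wA wB H' z" using y z by simp
    also have "\<dots> \<le> K" using p2 z by blast
    finally show "degree G x \<le> K" .
  qed
qed


definition nbG :: "graph \<Rightarrow> nat set \<Rightarrow> nat set" where
  "nbG G A = A \<union> {y. \<exists>e\<in>edges G. (src G e \<in> A \<and> tgt G e = y) \<or> (tgt G e \<in> A \<and> src G e = y)}"

definition ball :: "graph \<Rightarrow> nat \<Rightarrow> nat set \<Rightarrow> nat set" where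
  "ball G k A = (nbG G ^^ k) A"

lemma ball_Suc: "ball G (Suc k) A = nbG G (ball G k A)"
  by (simp add: ball_def)

lemma ball_0: "ball G 0 A = A"
  by (simp add: ball_def)

lemma ball_mono_k: "k \<le> k' \<Longrightarrow> ball G k A \<subseteq> ball G k' A"
proof (induction k' rule: nat.induct)
  case zero then show ?case by simp
next
  case (Suc k')
  show ?case
  proof (cases "k = Suc k'")
    case True then show ?thesis by simp
  next
    case False then have "k \<le> k'" using Suc.prems by simp
    then have "ball G k A \<subseteq> ball G k' A" by (rule Suc.IH)
    also have "\<dots> \<subseteq> ball G (Suc k') A" unfolding ball_Suc nbG_def by blast
    finally show ?thesis .
  qed
qed

lemma nbG_sub: "wf_graph G \<Longrightarrow> A \<subseteq> verts G \<Longrightarrow> nbG G A \<subseteq> verts G"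
  unfolding nbG_def wf_graph_def by blast

lemma ball_sub: "wf_graph G \<Longrightarrow> A \<subseteq> verts G \<Longrightarrow> ball G k A \<subseteq> verts G"
  by (induction k) (auto simp: ball_0 ball_Suc dest: nbG_sub)

lemma nbG_card:
  assumes wf: "wf_graph G" and A: "A \<subseteq> verts G" and deg: "\<forall>x\<in>verts G. degree G x \<le> K"
  shows "finite (nbG G A) \<and> card (nbG G A) \<le> (K+1) * card A"
proof -
  have fA: "finite A" using A wf finite_subset by (auto simp: wf_graph_def)
  have fE: "finite (edges G)" using wf by (simp add: wf_graph_def)
  define N where "N x = tgt G ` {e\<in>edges G. src G e = x} \<union> src G ` {e\<in>edges G. tgt G e = x}" for x
  have eq: "nbG G A = A \<union> (\<Union>x\<in>A. N x)" unfolding nbG_def N_def by blast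
  have fN: "finite (N x)" for x unfolding N_def using fE by auto
  have cN: "card (N x) \<le> K" if "x \<in> A" for x
  proof -
    have "card (N x) \<le> card (tgt G ` {e\<in>edges G. src G e = x}) + card (src G ` {e\<in>edges G. tgt G e = x})"
      unfolding N_def by (rule card_Un_le)
    also have "\<dots> \<le> outd G x + ind G x" unfolding outd_def ind_def
      by (intro add_mono card_image_le) (use fE in auto)
    also have "\<dots> \<le> K" using deg that A by (auto simp: degree_eq)
    finally show ?thesis .
  qed
  have "card (nbG G A) \<le> card A + card (\<Union>x\<in>A. N x)" unfolding eq by (rule card_Un_le)
  also have "card (\<Union>x\<in>A. N x) \<le> (\<Sum>x\<in>A. card (N x))" by (rule card_UN_le[OF fA])
  also have "\<dots> \<le> (\<Sum>x\<in>A. K)" by (rule sum_mono) (use cN in auto)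
  also have "\<dots> = K * card A" by simp
  finally have "card (nbG G A) \<le> (K+1) * card A" by simp
  moreover have "finite (nbG G A)" unfolding eq using fA fN by auto
  ultimately show ?thesis by blast
qed

lemma ball_card:
  assumes wf: "wf_graph G" and A: "A \<subseteq> verts G" and deg: "\<forall>x\<in>verts G. degree G x \<le> K"
  shows "finite (ball G k A) \<and> card (ball G k A) \<le> (K+1)^k * card A"
proof (induction k)
  case 0 then show ?case using A wf finite_subset by (auto simp: ball_0 wf_graph_def)
next
  case (Suc k)
  have sub: "ball G k A \<subseteq> verts G" by (rule ball_sub[OF wf A])
  have "finite (ball G (Suc k) A) \<and> card (ball G (Suc k) A) \<le> (K+1) * card (ball G k A)"
    unfolding ball_Suc by (rule nbG_card[OF wf sub deg])
  moreover have "(K+1) * card (ball G k A) \<le> (K+1) * ((K+1)^k * card A)"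
    using Suc.IH by (intro mult_left_mono) auto
  moreover have "(K+1) * ((K+1)^k * card A) = (K+1)^(Suc k) * card A" by (simp only: power_Suc mult.assoc)
  ultimately show ?case by (metis (no_types, lifting) le_trans)
qed

definition adjR :: "graph \<Rightarrow> (nat \<times> nat) set" where
  "adjR R = (\<lambda>e. (src R e, tgt R e)) ` edges R \<union> (\<lambda>e. (tgt R e, src R e)) ` edges R"

lemma walk_image:
  assumes cm: "char_map R v w G f g" and "(a, u) \<in> adjR R ^^ k" and "f a \<in> B"
  shows "f u \<in> ball G k B"
  using assms(2)
proof (induction k arbitrary: u)
  case 0 then show ?case using assms(3) by (simp add: ball_0)
next
  case (Suc k)
  from Suc.prems obtain y where y: "(a, y) \<in> adjR R ^^ k" "(y, u) \<in> adjR R" by (rule relpow_Suc_E)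
  have fy: "f y \<in> ball G k B" by (rule Suc.IH[OF y(1)])
  from y(2) obtain r where r: "r \<in> edges R" "(src R r = y \<and> tgt R r = u) \<or> (tgt R r = y \<and> src R r = u)"
    unfolding adjR_def by blast
  have gr: "g r \<in> edges G" "src G (g r) = f (src R r)" "tgt G (g r) = f (tgt R r)"
    using cm r(1) unfolding char_map_def by auto
  from r(2) show ?case
  proof
    assume h: "src R r = y \<and> tgt R r = u"
    then have "src G (g r) \<in> ball G k B" "tgt G (g r) = f u" using gr fy by auto
    then show ?thesis unfolding ball_Suc nbG_def using gr(1) by blast
  next
    assume h: "tgt R r = y \<and> src R r = u"
    then have "tgt G (g r) \<in> ball G k B" "src G (g r) = f u" using gr fy by auto
    then show ?thesis unfolding ball_Suc nbG_def using gr(1) by blast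
  qed
qed

lemma adjR_conn:
  assumes "connected_graph R" "a \<in> verts R" "u \<in> verts R"
  shows "(a, u) \<in> (adjR R)\<^sup>*"
proof -
  have "(\<lambda>a b. \<exists>e\<in>edges R. (src R e = a \<and> tgt R e = b) \<or> (src R e = b \<and> tgt R e = a))\<^sup>*\<^sup>* a u"
    using assms unfolding connected_graph_def by blast
  moreover have "{(x, y). \<exists>e\<in>edges R. (src R e = x \<and> tgt R e = y) \<or> (src R e = y \<and> tgt R e = x)} = adjR R"
    unfolding adjR_def by auto
  ultimately show ?thesis unfolding Enum.rtranclp_rtrancl_eq by simp
qed

lemma count_bound:
  assumes wfG: "wf_graph G" and wfR: "wf_graph R" and conn: "connected_graph R"
    and deg: "\<forall>x\<in>verts G. degree G x \<le> K" and cS: "collapsible R v w G S"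
  shows "finite {S'. collapsible R v w G S' \<and> S' \<noteq> S \<and> snd S \<inter> snd S' \<noteq> {}} \<and>
         card {S'. collapsible R v w G S' \<and> S' \<noteq> S \<and> snd S \<inter> snd S' \<noteq> {}} \<le>
           ((K+1)^(card (adjR R)) * card (verts R))^(card (verts R)) *
           (K * ((K+1)^(card (adjR R)) * card (verts R)))^(card (edges R))"
proof -
  let ?T = "{S'. collapsible R v w G S' \<and> S' \<noteq> S \<and> snd S \<inter> snd S' \<noteq> {}}"
  define L where "L = card (adjR R)"
  define n where "n = card (verts R)"
  define m where "m = card (edges R)"
  obtain f g where cm: "char_map R v w G f g" and S: "S = (f ` verts R, g ` edges R)"
    using cS unfolding collapsible_def by blast
  have fVR: "finite (verts R)" and fER: "finite (edges R)" using wfR by (auto simp: wf_graph_def)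
  have fEG: "finite (edges G)" using wfG by (auto simp: wf_graph_def)
  define A0 where "A0 = f ` verts R"
  have A0s: "A0 \<subseteq> verts G" using cm unfolding char_map_def A0_def by blast
  have cA0: "card A0 \<le> n" unfolding A0_def n_def by (rule card_image_le[OF fVR])
  define Y where "Y = ball G L A0"
  have Ys: "Y \<subseteq> verts G" unfolding Y_def by (rule ball_sub[OF wfG A0s])
  have Yc: "finite Y \<and> card Y \<le> (K+1)^L * card A0" unfolding Y_def by (rule ball_card[OF wfG A0s deg])
  have cY: "card Y \<le> (K+1)^L * n"
    using Yc cA0 by (meson le_trans mult_le_mono2)
  define Z where "Z = {e\<in>edges G. src G e \<in> Y}"
  have fZ: "finite Z" unfolding Z_def using fEG by simp
  have cZ: "card Z \<le> K * card Y"
  proof -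
    have "Z = (\<Union>y\<in>Y. {e\<in>edges G. src G e = y})" unfolding Z_def by blast
    then have "card Z \<le> (\<Sum>y\<in>Y. card {e\<in>edges G. src G e = y})"
      using card_UN_le[of Y "\<lambda>y. {e\<in>edges G. src G e = y}"] Yc by simp
    also have "\<dots> \<le> (\<Sum>y\<in>Y. K)"
    proof (rule sum_mono)
      fix y assume "y \<in> Y"
      then have "degree G y \<le> K" using deg Ys by blast
      then show "card {e\<in>edges G. src G e = y} \<le> K" unfolding degree_eq outd_def by simp
    qed
    finally show ?thesis by (simp add: mult.commute)
  qed
  have fAR: "finite (adjR R)" unfolding adjR_def using fER by simp
  define P where "P = (\<Pi>\<^sub>E u\<in>verts R. Y) \<times> (\<Pi>\<^sub>E r\<in>edges R. Z)"
  define F where "F = (\<lambda>(\<phi>::nat \<Rightarrow> nat, \<psi>::nat \<Rightarrow> nat). (\<phi> ` verts R, \<psi> ` edges R))"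
  have sub: "?T \<subseteq> F ` P"
  proof
    fix S' assume "S' \<in> ?T"
    then have cS': "collapsible R v w G S'" and sh: "snd S \<inter> snd S' \<noteq> {}" by auto
    obtain f' g' where cm': "char_map R v w G f' g'" and S': "S' = (f' ` verts R, g' ` edges R)"
      using cS' unfolding collapsible_def by blast
    obtain e0 where e0: "e0 \<in> g ` edges R" "e0 \<in> g' ` edges R" using sh S S' by auto
    obtain r where r: "r \<in> edges R" "e0 = g r" using e0(1) by blast
    obtain r0 where r0: "r0 \<in> edges R" "e0 = g' r0" using e0(2) by blast
    define a where "a = src R r0"
    have aR: "a \<in> verts R" using wfR r0(1) unfolding a_def wf_graph_def by blast
    have "f' a = src G e0" using cm' r0 unfolding char_map_def a_def by auto
    also have "\<dots> = f (src R r)" using cm r unfolding char_map_def by auto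
    finally have fa: "f' a \<in> A0" unfolding A0_def using wfR r(1) unfolding wf_graph_def by auto
    have fY: "f' u \<in> Y" if u: "u \<in> verts R" for u
    proof -
      have "(a, u) \<in> (adjR R)\<^sup>*" by (rule adjR_conn[OF conn aR u])
      then obtain k where k: "k \<le> L" "(a, u) \<in> adjR R ^^ k"
        using rtrancl_finite_eq_relpow[OF fAR] unfolding L_def by blast
      have "f' u \<in> ball G k A0" by (rule walk_image[OF cm' k(2) fa])
      then show ?thesis unfolding Y_def using ball_mono_k[OF k(1)] by blast
    qed
    have gZ: "g' r' \<in> Z" if r': "r' \<in> edges R" for r'
    proof -
      have "g' r' \<in> edges G" "src G (g' r') = f' (src R r')" using cm' r' unfolding char_map_def by auto
      moreover have "src R r' \<in> verts R" using wfR r' unfolding wf_graph_def by blast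
      ultimately show ?thesis unfolding Z_def using fY by auto
    qed
    have "(restrict f' (verts R), restrict g' (edges R)) \<in> P"
      unfolding P_def using fY gZ by auto
    moreover have "F (restrict f' (verts R), restrict g' (edges R)) = S'"
      unfolding F_def S' by (simp add: image_restrict_eq)
    ultimately show "S' \<in> F ` P" by (metis image_eqI)
  qed
  have fP: "finite P" unfolding P_def using fVR fER Yc fZ by (auto intro!: finite_PiE)
  have cP: "card P = card Y ^ n * card Z ^ m"
    unfolding P_def n_def m_def card_cartesian_product card_PiE[OF fVR] card_PiE[OF fER] by simp
  have finT: "finite ?T" by (rule finite_subset[OF sub finite_imageI[OF fP]])
  have "card ?T \<le> card (F ` P)" by (rule card_mono[OF finite_imageI[OF fP] sub])
  also have "\<dots> \<le> card P" by (rule card_image_le[OF fP])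
  also have "\<dots> = card Y ^ n * card Z ^ m" by (rule cP)
  also have "\<dots> \<le> ((K+1)^L * n) ^ n * (K * ((K+1)^L * n)) ^ m"
  proof (rule mult_le_mono)
    show "card Y ^ n \<le> ((K+1)^L * n) ^ n" by (rule power_mono[OF cY]) simp
    have "card Z \<le> K * ((K+1)^L * n)" using cZ cY by (meson le_trans mult_le_mono2)
    then show "card Z ^ m \<le> (K * ((K+1)^L * n)) ^ m" by (rule power_mono) simp
  qed
  finally show ?thesis using finT unfolding L_def n_def m_def by simp
qed


lemma rs_edge: "replace_step R v w G G' \<Longrightarrow> edges G \<noteq> {}"
  apply (unfold replace_step_def)
  apply (erule conjE)
  apply (erule bexE)
  apply (rule notI)
  apply simp
  done

lemma rs_verts: "replace_step R v w G G' \<Longrightarrow> x \<in> verts G \<Longrightarrow> verts G' \<noteq> {}"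
  apply (unfold replace_step_def)
  apply (erule conjE)
  apply (erule bexE)
  apply (erule exE)+
  apply (elim conjE)
  apply (rule notI)
  apply simp
  done

lemma exp_from_edgeless:
  assumes "expansion R v w G0 H" "edges G0 = {}"
  shows "H = G0"
  using assms(1) unfolding expansion_def
proof (induction rule: rtranclp_induct)
  case base then show ?case by simp
next
  case (step y z)
  then show ?case using assms(2) rs_edge by blast
qed

lemma exp_nonempty:
  assumes "expansion R v w G H" "x \<in> verts G"
  shows "verts H \<noteq> {}"
  using assms(1) unfolding expansion_def
proof (induction rule: rtranclp_induct)
  case base then show ?case using assms(2) by blast
next
  case (step y z)
  then obtain a where "a \<in> verts y" by blast
  then show ?case using rs_verts[OF step.hyps(2)] by blast
qed

theorem lemma4p13:
  fixes G0 R :: graph and v w :: nat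
  assumes "replacement_system G0 R v w"
    and "expanding G0 R v w"
    and "finite_branching G0 R v w"
    and "connected_graph R"
  shows "\<exists>i::nat. \<forall>G \<in> graph_family G0 R v w. \<forall>S. collapsible R v w G S \<longrightarrow>
           finite {S'. collapsible R v w G S' \<and> S' \<noteq> S \<and> snd S \<inter> snd S' \<noteq> {}} \<and>
           card {S'. collapsible R v w G S' \<and> S' \<noteq> S \<and> snd S \<inter> snd S' \<noteq> {}} \<le> i"
proof (cases "edges G0 = {}")
  case True
  have vR: "v \<in> verts R" using assms(1) by (simp add: replacement_system_def)
  have V0: "verts G0 = {}" using assms(2) True unfolding expanding_def no_isolated_def by blast
  show ?thesis
  proof (intro exI[of _ 0] ballI allI impI)
    fix G S assume G: "G \<in> graph_family G0 R v w" and cS: "collapsible R v w G S"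
    obtain H H' where e1: "expansion R v w G H" and e2: "expansion R v w G0 H'"
      and iso: "graph_iso H H'" using G unfolding graph_family_def by blast
    have "H' = G0" by (rule exp_from_edgeless[OF e2 True])
    then have "verts H = {}" using iso V0 unfolding graph_iso_def bij_betw_def by auto
    moreover obtain f g where "char_map R v w G f g" using cS unfolding collapsible_def by blast
    then have "f v \<in> verts G" using vR unfolding char_map_def by blast
    ultimately have False using exp_nonempty[OF e1] by blast
    then show "finite {S'. collapsible R v w G S' \<and> S' \<noteq> S \<and> snd S \<inter> snd S' \<noteq> {}} \<and>
           card {S'. collapsible R v w G S' \<and> S' \<noteq> S \<and> snd S \<inter> snd S' \<noteq> {}} \<le> 0" by blast
  qed
next
  case False
  obtain K where K: "\<forall>G\<in>graph_family G0 R v w. \<forall>x\<in>verts G. degree G x \<le> K"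
    using family_deg_bound[OF assms(1-3) False] by blast
  have wfR: "wf_graph R" using assms(1) by (simp add: replacement_system_def)
  show ?thesis
  proof (intro exI ballI allI impI)
    fix G S assume G: "G \<in> graph_family G0 R v w" and cS: "collapsible R v w G S"
    have wfG: "wf_graph G" using G by (simp add: graph_family_def)
    show "finite {S'. collapsible R v w G S' \<and> S' \<noteq> S \<and> snd S \<inter> snd S' \<noteq> {}} \<and>
           card {S'. collapsible R v w G S' \<and> S' \<noteq> S \<and> snd S \<inter> snd S' \<noteq> {}} \<le>
           ((K+1)^(card (adjR R)) * card (verts R))^(card (verts R)) *
           (K * ((K+1)^(card (adjR R)) * card (verts R)))^(card (edges R))"
      by (rule count_bound[OF wfG wfR assms(4) _ cS]) (use K G in blast)
  qed
qed


end
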